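(* Consider the multi-hop control network closed loop described in the context, with plant, graphs, scheduling (hence all path delays), the integers $n,r,m,s$ and the step amplitude $A$ fixed. There exists a polynomial $Q$ in the entries of $\mathbf d=(d_s,\dots,d_0)$ and $\mathbf w_R=(W_R(e))_{e\in E_R}$, with coefficients depending only on the fixed data, such that for every choice of $(\mathbf c,\mathbf d,\mathbf w_R,\mathbf w_O)$ for which the closed loop satisfies the deadbeat identity $$D_C(z)D_{P'}(z)+N_{C'}(z)N_{G_R}(z)N_P(z)N_{G_O}(z)=z^{l},\qquad l=m+r+1,$$ and the step response has zero steady-state error ($e(k)\to 0$), the quadratic $\ell_2$ norm of the error satisfies $$\|e\|_{\mathcal L_2}^2=\sum_{k\ge 0}e(k)^2=Q(\mathbf d,\mathbf w_R).$$
   Context: Plant: a discrete-time SISO transfer function $P(z)=\dfrac{N_P(z)}{M(z)D_{P'}(z)}$ with $N_P(z)=b_{n-1}z^{n-1}+\dots+b_0$, $D_{P'}(z)=z^r+a_{r-1}z^{r-1}+\dots+a_0$, $M(z)$ a monic polynomial, and $r+\deg M=n$. Controllability network: an acyclic directed graph $(V_R,E_R)$ with a controller node $v_c$ and an actuator node $v_u$, a weight function $W_R:E_R\to\mathbb R$, and a fixed periodic scheduling that assigns to every directed path $\rho$ from $v_c$ to $v_u$ a delay $d(\rho)\in\mathbb N$. Let $\chi_R(d)$ be the set of such paths of delay $d$, $D_R$ the finite set of delays that occur, $\bar D_R=\max D_R$, $W_R(\rho)$ the product of the weights of the edges of $\rho$, $\gamma_R(d)=\sum_{\rho\in\chi_R(d)}W_R(\rho)$,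 $N_{G_R}(z)=\sum_{d\in D_R}\gamma_R(d)z^{\bar D_R-d}$ and $G_R(z)=N_{G_R}(z)/z^{\bar D_R}$. The observability network is defined analogously (acyclic graph $(V_O,E_O)$ with paths from the sensor node to $v_c$, weights $W_O$, delay set $D_O$, $\bar D_O=\max D_O$, coefficients $\gamma_O$, $N_{G_O}(z)=\sum_{d\in D_O}\gamma_O(d)z^{\bar D_O-d}$, $G_O(z)=N_{G_O}(z)/z^{\bar D_O}$). Controller: $C(z)=M(z)z^{\bar D_R}z^{\bar D_O}C'(z)$, $C'(z)=N_{C'}(z)/D_C(z)$ with $N_{C'}(z)=d_sz^s+\dots+d_0$, $D_C(z)=(z-1)(z^m+c_{m-1}z^{m-1}+\dots+c_0)$, where $m+1=s+\deg M+\bar D_R+\bar D_O$; decision vectors $\mathbf c=(c_{m-1},\dots,c_0)$, $\mathbf d=(d_s,\dots,d_0)$, $\mathbf w_R=(W_R(e))_{e\in E_R}$, $\mathbf w_O=(W_O(e))_{e\in E_O}$. Closed loop: with reference $r(k)=A$ for $k\ge0$ (Z-transform $R(z)=Az/(z-1)$), the plant output has Z-transform $Y(z)=\dfrac{C(z)G_R(z)P(z)}{1+C(z)G_R(z)P(z)G_O(z)}R(z)$, and the error is $e(k)=y(k)-r(k)$. *)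

theory Defs
  imports "HOL-Analysis.Analysis" "HOL-Computational_Algebra.Polynomial"
          "Graph_Theory.Graph_Theory"
begin

definition cpoly :: "real poly \<Rightarrow> complex \<Rightarrow> complex" where
  "cpoly p z = poly (map_poly complex_of_real p) z"

definition net_paths :: "('a,'b) pre_digraph \<Rightarrow> 'a \<Rightarrow> 'a \<Rightarrow> 'b list set" where
  "net_paths G u v = {p. pre_digraph.apath G u p v}"

definition acyclic_net :: "('a,'b) pre_digraph \<Rightarrow> bool" where
  "acyclic_net G \<longleftrightarrow> \<not> (\<exists>p. pre_digraph.cycle G p)"

definition path_weight :: "('b \<Rightarrow> real) \<Rightarrow> 'b list \<Rightarrow> real" where
  "path_weight W p = prod_list (map W p)"

definition delay_set :: "('a,'b) pre_digraph \<Rightarrow> 'a \<Rightarrow> 'a \<Rightarrow> ('b list \<Rightarrow> nat) \<Rightarrow> nat set" where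
  "delay_set G u v dl = dl ` net_paths G u v"

definition max_delay :: "('a,'b) pre_digraph \<Rightarrow> 'a \<Rightarrow> 'a \<Rightarrow> ('b list \<Rightarrow> nat) \<Rightarrow> nat" where
  "max_delay G u v dl = Max (delay_set G u v dl)"

definition gamma_net :: "('a,'b) pre_digraph \<Rightarrow> 'a \<Rightarrow> 'a \<Rightarrow> ('b list \<Rightarrow> nat) \<Rightarrow> ('b \<Rightarrow> real) \<Rightarrow> nat \<Rightarrow> real" where
  "gamma_net G u v dl W d = (\<Sum>p\<in>{p\<in>net_paths G u v. dl p = d}. path_weight W p)"

definition NG_poly :: "('a,'b) pre_digraph \<Rightarrow> 'a \<Rightarrow> 'a \<Rightarrow> ('b list \<Rightarrow> nat) \<Rightarrow> ('b \<Rightarrow> real) \<Rightarrow> real poly" where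
  "NG_poly G u v dl W =
     (\<Sum>d\<in>delay_set G u v dl. monom (gamma_net G u v dl W d) (max_delay G u v dl - d))"

definition NC_poly :: "nat \<Rightarrow> (nat \<Rightarrow> real) \<Rightarrow> real poly" where
  "NC_poly s d = (\<Sum>i\<le>s. monom (d i) i)"

definition DC_poly :: "nat \<Rightarrow> (nat \<Rightarrow> real) \<Rightarrow> real poly" where
  "DC_poly m c = [:-1, 1:] * (monom 1 m + (\<Sum>i<m. monom (c i) i))"

definition polynomial_fun :: "'v set \<Rightarrow> (('v \<Rightarrow> real) \<Rightarrow> real) \<Rightarrow> bool" where
  "polynomial_fun V Q \<longleftrightarrow>
     (\<exists>S cf. finite S \<and> (\<forall>\<alpha>\<in>S. \<forall>v. v \<notin> V \<longrightarrow> \<alpha> v = 0) \<and>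
        (\<forall>x. Q x = (\<Sum>\<alpha>\<in>S. cf \<alpha> * (\<Prod>v\<in>V. x v ^ \<alpha> v))))"

definition has_ztransform :: "(nat \<Rightarrow> real) \<Rightarrow> (complex \<Rightarrow> complex) \<Rightarrow> bool" where
  "has_ztransform x X \<longleftrightarrow>
     (\<exists>\<rho>. \<forall>z. norm z > \<rho> \<longrightarrow> (\<lambda>k. complex_of_real (x k) / z ^ k) sums X z)"

end

theory Submission
  imports Defs
begin


lemma powser_unique0:
  fixes a :: "nat \<Rightarrow> complex"
  assumes r: "r > 0" and h: "\<And>w. 0 < norm w \<Longrightarrow> norm w < r \<Longrightarrow> (\<lambda>k. a k * w^k) sums 0"
  shows "a k = 0"
proof (induction k rule: less_induct)
  case (less k)
  define f where "f = (\<lambda>w. \<Sum>j. a (j+k) * w^j)"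
  have s: "(\<lambda>j. a (j+k) * w^j) sums 0" if w: "0 < norm w" "norm w < r" for w
  proof -
    have "(\<lambda>n. a n * w^n) sums 0" using h w by blast
    moreover have "(\<Sum>i<k. a i * w^i) = 0" using less by simp
    ultimately have "(\<lambda>i. a (i+k) * w^(i+k)) sums 0"
      using sums_iff_shift[of "\<lambda>n. a n * w^n" k 0] by simp
    then have "(\<lambda>i. a (i+k) * w^(i+k) / w^k) sums (0 / w^k)" by (rule sums_divide)
    moreover have "\<And>i. a (i+k) * w^(i+k) / w^k = a (i+k) * w^i" using w by (simp add: power_add)
    ultimately show ?thesis by simp
  qed
  define w0 where "w0 = complex_of_real (r/2)"
  have w0: "0 < norm w0" "norm w0 < r" using r by (auto simp: w0_def)
  have "summable (\<lambda>j. a (j+k) * w0^j)" using s[OF w0] sums_summable by blast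
  then have "isCont f 0" unfolding f_def by (rule isCont_powser) (use w0 in simp)
  then have t1: "(f \<longlongrightarrow> f 0) (at 0)" by (simp add: isCont_def)
  have f0: "f 0 = a k" unfolding f_def using powser_zero[of "\<lambda>j. a (j+k)"] by simp
  have "eventually (\<lambda>w. f w = 0) (at 0)"
    unfolding eventually_at using r
    by (intro exI[of _ r]) (auto simp: f_def dist_norm intro!: sums_unique[symmetric] s)
  then have t2: "(f \<longlongrightarrow> 0) (at 0)" by (simp add: tendsto_eventually)
  have "f 0 = 0" using tendsto_unique[OF _ t1 t2] by simp
  then show ?case using f0 by simp
qed



lemma pf_const: "polynomial_fun V (\<lambda>x. c)"
  unfolding polynomial_fun_def
  by (rule exI[of _ "{\<lambda>_. 0}"], rule exI[of _ "\<lambda>_. c"]) simp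

lemma pf_var: assumes "finite V" "v \<in> V" shows "polynomial_fun V (\<lambda>x. x v)"
  unfolding polynomial_fun_def
proof (rule exI[of _ "{\<lambda>u. if u = v then 1 else 0}"], rule exI[of _ "\<lambda>_. 1"], intro conjI allI ballI impI)
  fix x :: "'a \<Rightarrow> real"
  have "(\<Prod>u\<in>V. x u ^ (if u = v then 1 else 0)) = (\<Prod>u\<in>V. if u = v then x u else 1)"
    by (intro prod.cong) auto
  also have "\<dots> = x v" using assms by (simp add: prod.delta)
  finally show "x v = (\<Sum>\<alpha>\<in>{\<lambda>u. if u = v then 1 else 0}. 1 * (\<Prod>u\<in>V. x u ^ \<alpha> u))" by simp
qed (use assms in auto)

lemma pf_add: assumes "polynomial_fun V f" "polynomial_fun V g"
  shows "polynomial_fun V (\<lambda>x. f x + g x)"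
proof -
  obtain S1 c1 where 1: "finite S1" "\<forall>\<alpha>\<in>S1. \<forall>v. v \<notin> V \<longrightarrow> \<alpha> v = 0"
    "\<forall>x. f x = (\<Sum>\<alpha>\<in>S1. c1 \<alpha> * (\<Prod>v\<in>V. x v ^ \<alpha> v))"
    using assms(1) unfolding polynomial_fun_def by blast
  obtain S2 c2 where 2: "finite S2" "\<forall>\<alpha>\<in>S2. \<forall>v. v \<notin> V \<longrightarrow> \<alpha> v = 0"
    "\<forall>x. g x = (\<Sum>\<alpha>\<in>S2. c2 \<alpha> * (\<Prod>v\<in>V. x v ^ \<alpha> v))"
    using assms(2) unfolding polynomial_fun_def by blast
  define c where "c = (\<lambda>\<alpha>. (if \<alpha> \<in> S1 then c1 \<alpha> else 0) + (if \<alpha> \<in> S2 then c2 \<alpha> else 0))"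
  show ?thesis unfolding polynomial_fun_def
  proof (rule exI[of _ "S1 \<union> S2"], rule exI[of _ c], intro conjI allI)
    fix x :: "'a \<Rightarrow> real"
    let ?X = "\<lambda>\<alpha>. (\<Prod>v\<in>V. x v ^ \<alpha> v)"
    have "(\<Sum>\<alpha>\<in>S1 \<union> S2. c \<alpha> * ?X \<alpha>) = (\<Sum>\<alpha>\<in>S1 \<union> S2. (if \<alpha> \<in> S1 then c1 \<alpha> * ?X \<alpha> else 0))
       + (\<Sum>\<alpha>\<in>S1 \<union> S2. (if \<alpha> \<in> S2 then c2 \<alpha> * ?X \<alpha> else 0))"
      unfolding c_def sum.distrib[symmetric] by (intro sum.cong refl) (simp add: distrib_right)
    also have "\<dots> = f x + g x"
      using 1 2 by (simp add: sum.If_cases Int_absorb1 Int_absorb2)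
    finally show "f x + g x = (\<Sum>\<alpha>\<in>S1 \<union> S2. c \<alpha> * ?X \<alpha>)" by simp
  qed (use 1 2 in auto)
qed

lemma pf_mult: assumes "polynomial_fun V f" "polynomial_fun V g"
  shows "polynomial_fun V (\<lambda>x. f x * g x)"
proof -
  obtain S1 c1 where 1: "finite S1" "\<forall>\<alpha>\<in>S1. \<forall>v. v \<notin> V \<longrightarrow> \<alpha> v = 0"
    "\<forall>x. f x = (\<Sum>\<alpha>\<in>S1. c1 \<alpha> * (\<Prod>v\<in>V. x v ^ \<alpha> v))"
    using assms(1) unfolding polynomial_fun_def by blast
  obtain S2 c2 where 2: "finite S2" "\<forall>\<alpha>\<in>S2. \<forall>v. v \<notin> V \<longrightarrow> \<alpha> v = 0"
    "\<forall>x. g x = (\<Sum>\<alpha>\<in>S2. c2 \<alpha> * (\<Prod>v\<in>V. x v ^ \<alpha> v))"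
    using assms(2) unfolding polynomial_fun_def by blast
  define pl where "pl = (\<lambda>(\<alpha>::'a\<Rightarrow>nat, \<beta>::'a\<Rightarrow>nat). (\<lambda>v. \<alpha> v + \<beta> v))"
  define S where "S = pl ` (S1 \<times> S2)"
  define c where "c = (\<lambda>\<gamma>. \<Sum>p\<in>{p\<in>S1 \<times> S2. pl p = \<gamma>}. c1 (fst p) * c2 (snd p))"
  show ?thesis unfolding polynomial_fun_def
  proof (rule exI[of _ S], rule exI[of _ c], intro conjI allI)
    fix x :: "'a \<Rightarrow> real"
    let ?X = "\<lambda>\<alpha>. (\<Prod>v\<in>V. x v ^ \<alpha> v)"
    have X: "?X (pl p) = ?X (fst p) * ?X (snd p)" for p
      by (cases p) (simp add: pl_def power_add prod.distrib)
    have "f x * g x = (\<Sum>p\<in>S1 \<times> S2. c1 (fst p) * c2 (snd p) * ?X (pl p))"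
      using 1 2 by (simp add: sum_product sum.cartesian_product X mult_ac case_prod_beta)
    also have "\<dots> = (\<Sum>\<gamma>\<in>S. \<Sum>p\<in>{p\<in>S1 \<times> S2. pl p = \<gamma>}. c1 (fst p) * c2 (snd p) * ?X (pl p))"
      by (rule sum.group[symmetric]) (use 1 2 in \<open>auto simp: S_def\<close>)
    also have "\<dots> = (\<Sum>\<gamma>\<in>S. c \<gamma> * ?X \<gamma>)"
      unfolding c_def sum_distrib_right by (intro sum.cong refl) auto
    finally show "f x * g x = (\<Sum>\<gamma>\<in>S. c \<gamma> * ?X \<gamma>)" .
  qed (use 1 2 in \<open>auto simp: S_def pl_def\<close>)
qed

lemma pf_sum: assumes "\<And>i. i \<in> I \<Longrightarrow> polynomial_fun V (f i)"
  shows "polynomial_fun V (\<lambda>x. \<Sum>i\<in>I. f i x)"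
proof (cases "finite I")
  case True
  then show ?thesis using assms
    by (induction I rule: finite_induct) (auto intro: pf_const pf_add)
qed (simp add: pf_const)

lemma pf_prod_list: assumes "finite V" "\<And>e. e \<in> set p \<Longrightarrow> h e \<in> V"
  shows "polynomial_fun V (\<lambda>x. prod_list (map (\<lambda>e. x (h e)) p))"
  using assms(2)
proof (induction p)
  case (Cons a p)
  have "polynomial_fun V (\<lambda>x. x (h a))" using Cons.prems by (intro pf_var assms(1)) auto
  then show ?case using Cons by (auto intro: pf_mult)
qed (simp add: pf_const)



lemma map_poly_of_real_mult:
  "map_poly complex_of_real (p * q) = map_poly complex_of_real p * map_poly complex_of_real q"
  by (rule poly_eqI) (simp add: coeff_map_poly coeff_mult of_real_sum)

lemma map_poly_of_real_add:
  "map_poly complex_of_real (p + q) = map_poly complex_of_real p + map_poly complex_of_real q"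
  by (rule poly_eqI) (simp add: coeff_map_poly)

lemma cpoly_mult: "cpoly (p * q) z = cpoly p z * cpoly q z"
  by (simp add: cpoly_def map_poly_of_real_mult)
lemma cpoly_add: "cpoly (p + q) z = cpoly p z + cpoly q z"
  by (simp add: cpoly_def map_poly_of_real_add)
lemma cpoly_monom: "cpoly (monom c k) z = complex_of_real c * z ^ k"
  by (simp add: cpoly_def map_poly_monom poly_monom)

lemma cpoly_nonzero_far:
  assumes "p \<noteq> 0" shows "\<exists>B. \<forall>z. norm z > B \<longrightarrow> cpoly p z \<noteq> 0"
proof -
  have "map_poly complex_of_real p \<noteq> 0" using assms by (subst map_poly_eq_0_iff) auto
  then have "finite {x. poly (map_poly complex_of_real p) x = 0}" by (rule poly_roots_finite)
  then have "bounded {x. poly (map_poly complex_of_real p) x = 0}" by blast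
  then obtain B where "\<forall>x\<in>{x. poly (map_poly complex_of_real p) x = 0}. norm x \<le> B"
    unfolding bounded_iff by blast
  then show ?thesis by (intro exI[of _ B]) (force simp: cpoly_def)
qed

lemma Y_formula:
  fixes M DP DC NC NGR NP NGO :: "real poly" and z :: complex
  assumes H: "DC*DP + NC*NGR*NP*NGO = monom 1 l"
   and nz: "cpoly M z \<noteq> 0" "cpoly DP z \<noteq> 0" "cpoly DC z \<noteq> 0" "z \<noteq> 0" "z \<noteq> 1"
  shows "(cpoly M z * z ^ a * z ^ b * (cpoly NC z / cpoly DC z)) * (cpoly NGR z / z ^ a) *
     (cpoly NP z / (cpoly M z * cpoly DP z)) /
     (1 + (cpoly M z * z ^ a * z ^ b * (cpoly NC z / cpoly DC z)) * (cpoly NGR z / z ^ a) *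
       (cpoly NP z / (cpoly M z * cpoly DP z)) * (cpoly NGO z / z ^ b)) *
     (complex_of_real A * z / (z - 1))
   = complex_of_real A * z * cpoly (monom 1 b * (NC * NGR * NP)) z / (z ^ l * (z - 1))"
proof -
  have H': "cpoly DC z * cpoly DP z + cpoly NC z * cpoly NGR z * cpoly NP z * cpoly NGO z = z ^ l"
    using arg_cong[OF H, of "\<lambda>p. cpoly p z"] by (simp add: cpoly_mult cpoly_add cpoly_monom)
  have z1: "z - 1 \<noteq> 0" using nz by simp
  have e1: "(cpoly M z * z ^ a * z ^ b * (cpoly NC z / cpoly DC z)) * (cpoly NGR z / z ^ a) *
     (cpoly NP z / (cpoly M z * cpoly DP z)) = z ^ b * (cpoly NC z * cpoly NGR z * cpoly NP z) / (cpoly DC z * cpoly DP z)"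
    using nz by (simp add: field_simps)
  have e2: "1 + z ^ b * (cpoly NC z * cpoly NGR z * cpoly NP z) / (cpoly DC z * cpoly DP z) * (cpoly NGO z / z ^ b)
     = z ^ l / (cpoly DC z * cpoly DP z)"
    using nz H'[symmetric] by (simp add: field_simps)
  show ?thesis unfolding e1 e2 using nz z1
    by (simp add: cpoly_mult cpoly_monom field_simps)
qed



lemma ser_lemma:
  fixes h :: "nat \<Rightarrow> real" and w :: complex
  assumes h0: "\<And>j. j = 0 \<or> j > l \<Longrightarrow> h j = 0"
    and Gb: "\<And>k. \<bar>(\<Sum>j\<le>k. h j)\<bar> \<le> Bd"
    and w: "norm w < 1"
  shows "(\<lambda>k. complex_of_real (\<Sum>j\<le>k. h j) * w^k) sums ((\<Sum>j\<le>l. complex_of_real (h j) * w^j) / (1 - w))"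
proof -
  define G where "G = (\<lambda>k. \<Sum>j\<le>k. h j)"
  have GSuc: "G (Suc k) = G k + h (Suc k)" for k by (simp add: G_def)
  have G0: "G 0 = 0" using h0[of 0] by (simp add: G_def)
  have sg: "summable (\<lambda>k. Bd * norm w ^ k)" using w by (intro summable_mult summable_geometric) simp
  have nb: "norm (complex_of_real (G k) * w^k) \<le> Bd * norm w ^ k" for k
  proof -
    have "norm (complex_of_real (G k) * w^k) = \<bar>G k\<bar> * norm w ^ k" by (simp add: norm_mult norm_power)
    also have "\<dots> \<le> Bd * norm w ^ k" using Gb[of k] unfolding G_def by (rule mult_right_mono) simp
    finally show ?thesis .
  qed
  have "summable (\<lambda>k. complex_of_real (G k) * w^k)"
    by (rule summable_comparison_test'[OF sg]) (rule nb)
  then obtain Sw where S: "(\<lambda>k. complex_of_real (G k) * w^k) sums Sw" by (auto simp: summable_def)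
  define f where "f = (\<lambda>k. if k = 0 then 0 else complex_of_real (G (k - 1)) * w^k)"
  have "(\<lambda>k. w * (complex_of_real (G k) * w^k)) sums (w * Sw)" using S by (rule sums_mult)
  moreover have "w * (complex_of_real (G k) * w^k) = f (Suc k)" for k by (simp add: f_def)
  ultimately have "(\<lambda>k. f (Suc k)) sums (w * Sw)" by simp
  then have f: "f sums (w * Sw)" unfolding sums_Suc_iff by (simp add: f_def)
  have "(\<lambda>k. complex_of_real (G k) * w^k - f k) sums (Sw - w * Sw)" using S f by (rule sums_diff)
  moreover have "complex_of_real (G k) * w^k - f k = complex_of_real (h k) * w^k" for k
  proof (cases k)
    case 0 then show ?thesis using G0 h0[of 0] by (simp add: f_def)
  next
    case (Suc k') then show ?thesis by (simp add: f_def GSuc distrib_right)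
  qed
  ultimately have 1: "(\<lambda>k. complex_of_real (h k) * w^k) sums (Sw - w * Sw)" by simp
  have 2: "(\<lambda>k. complex_of_real (h k) * w^k) sums (\<Sum>j\<le>l. complex_of_real (h j) * w^j)"
    by (rule sums_finite) (use h0 in auto)
  have "(1 - w) * Sw = (\<Sum>j\<le>l. complex_of_real (h j) * w^j)"
    using sums_unique2[OF 1 2] by (simp add: algebra_simps)
  moreover have "1 - w \<noteq> 0" using w by auto
  ultimately have "Sw = (\<Sum>j\<le>l. complex_of_real (h j) * w^j) / (1 - w)"
    by (simp add: field_simps)
  then show ?thesis using S by (simp add: G_def)
qed


lemma analytic:
  fixes F :: "real poly" and y :: "nat \<Rightarrow> real" and Yf :: "complex \<Rightarrow> complex"
  assumes degF: "\<forall>i\<ge>l. coeff F i = 0"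
   and Y: "\<forall>z. norm z > \<rho> \<longrightarrow> (\<lambda>k. complex_of_real (y k) / z^k) sums Yf z"
   and Yeq: "\<forall>z. norm z > B \<longrightarrow> Yf z = complex_of_real A * z * cpoly F z / (z^l * (z-1))"
   and lim: "(\<lambda>k. y k - A) \<longlonglongrightarrow> 0"
  shows "(\<lambda>k. (y k - A)\<^sup>2) sums
    (\<Sum>k<l. (A * (\<Sum>j\<le>k. (if 0 < j \<and> j \<le> l then coeff F (l - j) else 0)) - A)\<^sup>2)"
proof -
  define h where "h = (\<lambda>j. if 0 < j \<and> j \<le> l then coeff F (l - j) else 0)"
  define G where "G = (\<lambda>k. \<Sum>j\<le>k. h j)"
  have h0: "h j = 0" if "j = 0 \<or> j > l" for j using that by (auto simp: h_def)
  have Gmin: "G k = (\<Sum>j\<le>min k l. h j)" for k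
  proof (cases "k \<le> l")
    case False
    then show ?thesis unfolding G_def
      by (intro sum.mono_neutral_right) (auto intro: h0)
  qed (simp add: G_def)
  define Bd where "Bd = (\<Sum>j\<le>l. \<bar>h j\<bar>)"
  have Gb: "\<bar>G k\<bar> \<le> Bd" for k
  proof -
    have "\<bar>G k\<bar> \<le> (\<Sum>j\<le>min k l. \<bar>h j\<bar>)" unfolding Gmin by (rule sum_abs)
    also have "\<dots> \<le> Bd" unfolding Bd_def by (intro sum_mono2) auto
    finally show ?thesis .
  qed
  have GSuc: "G (Suc k) = G k + h (Suc k)" for k by (simp add: G_def)
  have G0: "G 0 = 0" by (simp add: G_def h0)
  have ser: "(\<lambda>k. complex_of_real (G k) * w^k) sums ((\<Sum>j\<le>l. complex_of_real (h j) * w^j) / (1 - w))"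
    if w: "norm w < 1" for w :: complex
    unfolding G_def by (rule ser_lemma[OF h0 _ w, where Bd=Bd]) (use Gb in \<open>auto simp: G_def\<close>)
  have Fz: "cpoly F z / z ^ l = (\<Sum>j\<le>l. complex_of_real (h j) * (1/z)^j)" if z: "z \<noteq> 0" for z
  proof -
    have "cpoly F z = (\<Sum>i\<le>degree F. complex_of_real (coeff F i) * z ^ i)"
      by (simp add: cpoly_def poly_altdef coeff_map_poly degree_map_poly)
    also have "\<dots> = (\<Sum>i<l. complex_of_real (coeff F i) * z ^ i)"
    proof (cases "F = 0")
      case False
      then have "degree F < l" using degF leading_coeff_neq_0[OF False] by (meson not_le)
      then show ?thesis
        by (intro sum.mono_neutral_left) (auto simp: coeff_eq_0)
    qed simp
    finally have "cpoly F z / z ^ l = (\<Sum>i<l. complex_of_real (coeff F i) * (1/z) ^ (l - i))"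
      using z by (simp add: sum_divide_distrib power_diff power_one_over field_simps)
    also have "\<dots> = (\<Sum>j\<in>{1..l}. complex_of_real (coeff F (l - j)) * (1/z) ^ j)"
      by (rule sum.reindex_bij_witness[of _ "\<lambda>j. l - j" "\<lambda>i. l - i"]) auto
    also have "\<dots> = (\<Sum>j\<le>l. complex_of_real (h j) * (1/z)^j)"
      by (rule sum.mono_neutral_cong_left) (auto simp: h_def)
    finally show ?thesis .
  qed
  define r where "r = 1 / max (max \<rho> B) 1"
  have r: "r > 0" by (simp add: r_def)
  have diff0: "(\<lambda>k. (complex_of_real (y k) - complex_of_real A * complex_of_real (G k)) * w^k) sums 0"
    if w: "0 < norm w" "norm w < r" for w :: complex
  proof -
    define z where "z = 1 / w"
    have wz: "w = 1 / z" using w by (simp add: z_def)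
    have M0: "max (max \<rho> B) 1 > 0" by simp
    have "norm w * max (max \<rho> B) 1 < 1" using w(2) M0 by (simp add: r_def field_simps)
    moreover have "\<And>M n::real. n > 0 \<Longrightarrow> n * M < 1 \<Longrightarrow> M < 1 / n" by (simp add: field_simps)
    ultimately have "max (max \<rho> B) 1 < 1 / norm w" using w(1) by blast
    then have nz: "norm z > max (max \<rho> B) 1" by (simp add: z_def norm_divide)
    then have zp: "norm z > \<rho>" "norm z > B" "norm z > 1" by auto
    have z0: "z \<noteq> 0" "z \<noteq> 1" using zp by auto
    have w1: "norm w < 1" using zp by (simp add: wz norm_divide divide_less_eq_1)
    have "(\<lambda>k. complex_of_real (y k) * w ^ k) sums Yf z"
      using Y zp by (simp add: wz power_one_over)
    moreover have "Yf z = complex_of_real A * ((\<Sum>j\<le>l. complex_of_real (h j) * w^j) / (1 - w))"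
    proof -
      have "Yf z = complex_of_real A * (cpoly F z / z^l) * (z / (z - 1))"
        using Yeq zp z0 by (simp add: field_simps)
      also have "z / (z - 1) = 1 / (1 - w)" using z0 by (simp add: wz field_simps)
      finally show ?thesis using Fz[OF z0(1)] by (simp add: wz)
    qed
    moreover have "(\<lambda>k. complex_of_real A * (complex_of_real (G k) * w^k)) sums
        (complex_of_real A * ((\<Sum>j\<le>l. complex_of_real (h j) * w^j) / (1 - w)))"
      by (rule sums_mult) (rule ser[OF w1])
    ultimately have "(\<lambda>k. complex_of_real (y k) * w ^ k - complex_of_real A * (complex_of_real (G k) * w^k)) sums 0"
      using sums_diff by fastforce
    then show ?thesis by (simp add: algebra_simps)
  qed
  have yG: "y k = A * G k" for k
    using powser_unique0[OF r diff0, of k] by (metis of_real_eq_iff of_real_mult right_minus_eq)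
  have Gl: "G k = G l" if "k \<ge> l" for k using that by (simp add: Gmin min_absorb2)
  have ev: "eventually (\<lambda>k. y k - A = A * G l - A) sequentially"
    unfolding eventually_sequentially by (intro exI[of _ l] allI impI) (metis yG Gl)
  have "(\<lambda>k. y k - A) \<longlonglongrightarrow> (A * G l - A)"
    by (rule tendsto_eventually) (rule eventually_mono[OF ev], simp)
  then have AG: "A * G l - A = 0" using lim LIMSEQ_unique by blast
  have "(\<lambda>k. (y k - A)\<^sup>2) sums (\<Sum>k<l. (y k - A)\<^sup>2)"
  proof (rule sums_finite)
    fix k assume "k \<notin> {..<l}"
    then have "y k - A = A * G l - A" by (metis yG Gl not_less lessThan_iff)
    then show "(y k - A)\<^sup>2 = 0" using AG by simp
  qed simp
  then show ?thesis by (simp add: yG G_def h_def)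
qed



lemma pf_if: assumes "polynomial_fun V f" "polynomial_fun V g"
  shows "polynomial_fun V (\<lambda>x. if b then f x else g x)"
  using assms by (cases b) simp_all

lemma pf_diff: assumes "polynomial_fun V f" "polynomial_fun V g"
  shows "polynomial_fun V (\<lambda>x. f x - g x)"
proof -
  have "polynomial_fun V (\<lambda>x. f x + (-1) * g x)"
    by (intro pf_add pf_mult assms pf_const)
  then show ?thesis by simp
qed

lemma pf_coeff_mult:
  assumes "\<And>i. polynomial_fun V (\<lambda>x. coeff (p x) i)" "\<And>i. polynomial_fun V (\<lambda>x. coeff (q x) i)"
  shows "polynomial_fun V (\<lambda>x. coeff (p x * q x) i)"
  unfolding coeff_mult by (intro pf_sum pf_mult assms)

lemma coeff_NC: "coeff (NC_poly s d) j = (if j \<le> s then d j else 0)"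
  unfolding NC_poly_def by (simp add: coeff_sum coeff_monom)

lemma coeff_NG: "coeff (NG_poly G u v dl W) j =
  (\<Sum>d\<in>delay_set G u v dl. if max_delay G u v dl - d = j then gamma_net G u v dl W d else 0)"
  unfolding NG_poly_def by (simp add: coeff_sum coeff_monom)

lemma degree_NC: "degree (NC_poly s d) \<le> s"
  by (rule degree_le) (simp add: coeff_NC)

lemma degree_NG: "degree (NG_poly G u v dl W) \<le> max_delay G u v dl"
  by (rule degree_le) (auto simp: coeff_NG intro!: sum.neutral)

lemma DC_nonzero: "DC_poly m c \<noteq> 0"
proof -
  have "coeff (monom 1 m + (\<Sum>i<m. monom (c i) i)) m = 1"
    by (simp add: coeff_sum coeff_monom)
  then have "monom 1 m + (\<Sum>i<m. monom (c i) i) \<noteq> 0" by (metis coeff_0 one_neq_zero)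
  moreover have "[:-1, 1:] \<noteq> (0::real poly)" by simp
  ultimately show ?thesis unfolding DC_poly_def by (metis no_zero_divisors)
qed

lemma pf_coeff_NC:
  assumes "finite V" "\<And>i. i \<le> s \<Longrightarrow> f i \<in> V"
  shows "polynomial_fun V (\<lambda>x. coeff (NC_poly s (\<lambda>i. x (f i))) j)"
  unfolding coeff_NC using assms by (cases "j \<le> s") (auto intro: pf_var pf_const)

lemma pf_coeff_NG:
  assumes "finite V" "\<And>e. e \<in> arcs G \<Longrightarrow> f e \<in> V"
  shows "polynomial_fun V (\<lambda>x. coeff (NG_poly G u v dl (\<lambda>e. x (f e))) j)"
  unfolding coeff_NG gamma_net_def path_weight_def
proof (intro pf_sum pf_if pf_const pf_prod_list[OF assms(1)])
  fix d p e assume "p \<in> {p \<in> net_paths G u v. dl p = d}" "e \<in> set p"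
  then have "e \<in> arcs G"
    by (auto simp: net_paths_def pre_digraph.apath_def pre_digraph.awalk_def)
  then show "f e \<in> V" by (rule assms(2))
qed

lemma wrapper:
  fixes F :: "real poly" and y :: "nat \<Rightarrow> real" and Yf :: "complex \<Rightarrow> complex"
  assumes degF: "\<forall>i\<ge>l. coeff F i = 0"
   and lim: "(\<lambda>k. y k - A) \<longlonglongrightarrow> 0"
   and Z: "has_ztransform y Yf"
   and Yeq: "\<forall>z. norm z > B \<longrightarrow> Yf z = complex_of_real A * z * cpoly F z / (z^l * (z-1))"
  shows "(\<lambda>k. (y k - A)\<^sup>2) sums
    (\<Sum>k<l. (A * (\<Sum>j\<le>k. (if 0 < j \<and> j \<le> l then coeff F (l - j) else 0)) - A)\<^sup>2)"
proof -
  obtain \<rho> where "\<forall>z. norm z > \<rho> \<longrightarrow> (\<lambda>k. complex_of_real (y k) / z^k) sums Yf z"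
    using Z unfolding has_ztransform_def by blast
  then show ?thesis using analytic[OF degF _ Yeq lim] by blast
qed

theorem proposition1:
  fixes NP DP M :: "real poly"
    and n r m s :: nat
    and A :: real
    and GR :: "('a, 'b) pre_digraph" and vc vu :: 'a and dR :: "'b list \<Rightarrow> nat"
    and GO :: "('c, 'e) pre_digraph" and vy vc' :: 'c and dO :: "'e list \<Rightarrow> nat"
  assumes DP_monic: "degree DP = r" "lead_coeff DP = 1"
    and M_monic: "lead_coeff M = 1"
    and n_def: "r + degree M = n"
    and NP_deg: "\<forall>i\<ge>n. coeff NP i = 0"
    and GR_graph: "fin_digraph GR" "acyclic_net GR" "vc \<in> verts GR" "vu \<in> verts GR"
    and GO_graph: "fin_digraph GO" "acyclic_net GO" "vy \<in> verts GO" "vc' \<in> verts GO"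
    and dims: "m + 1 = s + degree M + max_delay GR vc vu dR + max_delay GO vy vc' dO"
  shows "\<exists>Q. polynomial_fun (Inl ` {..s} \<union> Inr ` arcs GR) Q \<and>
    (\<forall>(c :: nat \<Rightarrow> real) (d :: nat \<Rightarrow> real) (wR :: 'b \<Rightarrow> real) (wO :: 'e \<Rightarrow> real)
       (y :: nat \<Rightarrow> real).
      let DRb = max_delay GR vc vu dR; DOb = max_delay GO vy vc' dO;
          NGR = NG_poly GR vc vu dR wR; NGO = NG_poly GO vy vc' dO wO;
          NC = NC_poly s d; DC = DC_poly m c;
          P = (\<lambda>z. cpoly NP z / (cpoly M z * cpoly DP z));
          C = (\<lambda>z. cpoly M z * z ^ DRb * z ^ DOb * (cpoly NC z / cpoly DC z));
          G_R = (\<lambda>z. cpoly NGR z / z ^ DRb);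
          G_O = (\<lambda>z. cpoly NGO z / z ^ DOb);
          R = (\<lambda>z. complex_of_real A * z / (z - 1));
          Y = (\<lambda>z. C z * G_R z * P z / (1 + C z * G_R z * P z * G_O z) * R z)
      in (DC * DP + NC * NGR * NP * NGO = monom 1 (m + r + 1)
          \<and> has_ztransform y Y
          \<and> (\<lambda>k. y k - A) \<longlonglongrightarrow> 0)
         \<longrightarrow> (\<lambda>k. (y k - A)\<^sup>2) sums Q (\<lambda>v. case v of Inl i \<Rightarrow> d i | Inr e \<Rightarrow> wR e))"
proof -
  let ?DR = "max_delay GR vc vu dR" and ?DO = "max_delay GO vy vc' dO"
  define l where "l = m + r + 1"
  define V where "V = Inl ` {..s} \<union> Inr ` arcs GR"
  have finV: "finite V" using fin_digraph.finite_arcs[OF GR_graph(1)] by (simp add: V_def)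
  define Fq where "Fq = (\<lambda>x :: nat + 'b \<Rightarrow> real. monom 1 ?DO *
     (NC_poly s (\<lambda>i. x (Inl i)) * NG_poly GR vc vu dR (\<lambda>e. x (Inr e)) * NP))"
  define Q where "Q = (\<lambda>x. \<Sum>k<l. (A * (\<Sum>j\<le>k. (if 0 < j \<and> j \<le> l then coeff (Fq x) (l - j) else 0)) - A)\<^sup>2)"
  have cF: "polynomial_fun V (\<lambda>x. coeff (Fq x) i)" for i
    unfolding Fq_def coeff_monom_mult
    by (intro pf_if pf_const pf_mult pf_coeff_mult pf_coeff_NC pf_coeff_NG finV)
       (auto simp: V_def)
  have pQ: "polynomial_fun V Q"
    unfolding Q_def power2_eq_square
    by (intro pf_sum pf_mult pf_diff pf_const pf_if cF)
  have NPdeg: "NP = 0 \<or> degree NP < n"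
    using NP_deg leading_coeff_neq_0[of NP] by (metis not_le)
  have degF: "\<forall>i\<ge>l. coeff (monom 1 ?DO * (NC_poly s d * NG_poly GR vc vu dR wR * NP)) i = 0"
    for d wR
  proof (intro allI impI)
    fix i assume i: "l \<le> i"
    show "coeff (monom 1 ?DO * (NC_poly s d * NG_poly GR vc vu dR wR * NP)) i = 0"
    proof (cases "NP = 0")
      case False
      then have dNP: "degree NP < n" using NPdeg by simp
      have "degree (NC_poly s d * NG_poly GR vc vu dR wR * NP) \<le>
          degree (NC_poly s d) + degree (NG_poly GR vc vu dR wR) + degree NP"
        by (meson add_mono_thms_linordered_semiring(3) degree_mult_le order_trans)
      also have "\<dots> < i - ?DO" using degree_NC[of s d] degree_NG[of GR vc vu dR wR] dNP i dims n_def
        by (simp add: l_def)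
      finally show ?thesis by (simp add: coeff_monom_mult coeff_eq_0)
    qed simp
  qed
  have M0: "M \<noteq> 0" using M_monic by auto
  have DP0: "DP \<noteq> 0" using DP_monic by auto
  obtain B1 where B1: "\<forall>z. norm z > B1 \<longrightarrow> cpoly M z \<noteq> 0" using cpoly_nonzero_far[OF M0] by blast
  obtain B2 where B2: "\<forall>z. norm z > B2 \<longrightarrow> cpoly DP z \<noteq> 0" using cpoly_nonzero_far[OF DP0] by blast
  show ?thesis
  proof (rule exI[of _ Q], intro conjI allI)
    show "polynomial_fun (Inl ` {..s} \<union> Inr ` arcs GR) Q" using pQ by (simp add: V_def)
  next
    fix c d :: "nat \<Rightarrow> real" and wR :: "'b \<Rightarrow> real" and wO :: "'e \<Rightarrow> real" and y :: "nat \<Rightarrow> real"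
    obtain B3 where B3: "\<forall>z. norm z > B3 \<longrightarrow> cpoly (DC_poly m c) z \<noteq> 0"
      using cpoly_nonzero_far[OF DC_nonzero] by blast
    define B where "B = max (max B1 B2) (max B3 1)"
    have QF: "Q (\<lambda>v. case v of Inl i \<Rightarrow> d i | Inr e \<Rightarrow> wR e) =
      (\<Sum>k<l. (A * (\<Sum>j\<le>k. (if 0 < j \<and> j \<le> l then
          coeff (monom 1 ?DO * (NC_poly s d * NG_poly GR vc vu dR wR * NP)) (l - j) else 0)) - A)\<^sup>2)"
      unfolding Q_def Fq_def by (simp cong: if_cong)
    show "let DRb = ?DR; DOb = ?DO;
          NGR = NG_poly GR vc vu dR wR; NGO = NG_poly GO vy vc' dO wO;
          NC = NC_poly s d; DC = DC_poly m c;
          P = (\<lambda>z. cpoly NP z / (cpoly M z * cpoly DP z));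
          C = (\<lambda>z. cpoly M z * z ^ DRb * z ^ DOb * (cpoly NC z / cpoly DC z));
          G_R = (\<lambda>z. cpoly NGR z / z ^ DRb);
          G_O = (\<lambda>z. cpoly NGO z / z ^ DOb);
          R = (\<lambda>z. complex_of_real A * z / (z - 1));
          Y = (\<lambda>z. C z * G_R z * P z / (1 + C z * G_R z * P z * G_O z) * R z)
      in (DC * DP + NC * NGR * NP * NGO = monom 1 (m + r + 1)
          \<and> has_ztransform y Y
          \<and> (\<lambda>k. y k - A) \<longlonglongrightarrow> 0)
         \<longrightarrow> (\<lambda>k. (y k - A)\<^sup>2) sums Q (\<lambda>v. case v of Inl i \<Rightarrow> d i | Inr e \<Rightarrow> wR e)"
      unfolding Let_def QF
      apply (intro impI, elim conjE)
      apply (rule wrapper[OF degF, where B = B])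
        apply assumption
       apply assumption
      apply (intro allI impI)
      apply (simp only: l_def)
      apply (rule Y_formula[where l = "m + r + 1"])
           apply assumption
      using B1 B2 B3 by (auto simp: B_def)
  qed
qed


end
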